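(* Let $f:[0,\infty)\to\mathbb{R}$ be convex with $f(1)=0$, let $Q$ be a Borel probability measure on $\mathcal{M}$, let $\lambda>0$, and fix a dataset $z$. (i) Assume (a) and (b). Then the optimization problem $$\min_{P\in\triangle_Q(\mathcal{M})}\; R_z(P)+\lambda D_f(P\|Q)$$ has a unique solution, denoted $P^{(Q,\lambda)}_{\Theta|Z=z}\in\triangle_Q(\mathcal{M})$. For all $\theta\in\operatorname{supp}Q$ it satisfies $$\frac{dP^{(Q,\lambda)}_{\Theta|Z=z}}{dQ}(\theta)=\dot f^{-1}\!\Big(-\frac{\beta+L_z(\theta)}{\lambda}\Big),$$ where $\beta$ is the real number in assumption (b). (ii) Assume (a), (b) and (c), and let $\eta\in[0,\infty)$ be such that $D_f\big(P^{(Q,\lambda)}_{\Theta|Z=z}\,\|\,Q\big)=\eta$. Then $P^{(Q,\lambda)}_{\Theta|Z=z}$ is also the unique solution to $$\min_{P\in\triangle_Q(\mathcal{M})} R_z(P)\quad\text{subject to}\quad D_f(P\|Q)\le\eta .$$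
   Context: Setting. - $\mathcal{M}\subseteq\mathbb{R}^d$ is a set of models; $\mathcal{X},\mathcal{Y}$ are sets of patterns and labels; $h:\mathcal{M}\times\mathcal{X}\to\mathcal{Y}$. - The loss $\ell:\mathcal{Y}\times\mathcal{Y}\to[0,\infty)$ satisfies $\ell(y,y)=0$ for all $y$. - For a dataset $z=((x_1,y_1),\dots,(x_n,y_n))\in(\mathcal{X}\times\mathcal{Y})^n$, the empirical risk is $L_z(\theta)=\frac1n\sum_{i=1}^n\ell(h(\theta,x_i),y_i)$. - For a Borel probability measure $P$ on $\mathcal{M}$, $R_z(P)=\int L_z(\theta)\,dP(\theta)$. - $\triangle(\mathcal{M})$ is the set of Borel probability measures on $\mathcal{M}$, and $\triangle_Q(\mathcal{M})=\{P\in\triangle(\mathcal{M}):P\ll Q\}$. $f$-divergence. For convex $f:[0,\infty)\to\mathbb{R}$ with $f(1)=0$ and $f(0)=\lim_{x\to0^+}f(x)$, the $f$-divergence is $D_f(P\|Q)=\int f\big(\frac{dP}{dQ}(\theta)\big)\,dQ(\theta)$ for $P\ll Q$. If $f$ is differentiable, $\dot f:(0,\infty)\to\mathbb{R}$ denotes its derivative and $\dot f^{-1}$ the inverse function of $\dot f$. Assumptions. - (a) $f$ is strictly convex and differentiable. - (b) There exists $\beta\in\mathbb{R}$ such that $0<\dot f^{-1}\big(-\frac{\beta+L_z(\theta)}{\lambda}\big)$ for all $\theta\in\operatorname{supp}Q$, and $\int\dot f^{-1}\big(-\frac{\beta+L_z(\theta)}{\lambda}\big)\,dQ(\theta)=1$.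 - (c) $L_z$ is separable with respect to $Q$: there exist $c>0$ and two subsets $\mathcal{M}_1,\mathcal{M}_2\subseteq\mathcal{M}$ with positive $Q$-measure such that $L_z(\theta_1)<c<L_z(\theta_2)<\infty$ for all $(\theta_1,\theta_2)\in\mathcal{M}_1\times\mathcal{M}_2$. *)

theory Defs
  imports "HOL-Probability.Probability"
begin

definition emp_risk ::
  "('y \<Rightarrow> 'y \<Rightarrow> real) \<Rightarrow> ('m \<Rightarrow> 'x \<Rightarrow> 'y) \<Rightarrow> ('x \<times> 'y) list \<Rightarrow> 'm \<Rightarrow> real" where
  "emp_risk ell h z theta =
     (1 / real (length z)) * (\<Sum>i<length z. ell (h theta (fst (z ! i))) (snd (z ! i)))"

text \<open>Expected empirical risk R_z(P) = integral of L_z w.r.t. P (L_z is nonnegative).\<close>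
definition exp_risk ::
  "('y \<Rightarrow> 'y \<Rightarrow> real) \<Rightarrow> ('m \<Rightarrow> 'x \<Rightarrow> 'y) \<Rightarrow> ('x \<times> 'y) list \<Rightarrow> 'm measure \<Rightarrow> ereal" where
  "exp_risk ell h z P = enn2ereal (\<integral>\<^sup>+ theta. ennreal (emp_risk ell h z theta) \<partial>P)"

definition DeltaQ :: "'m measure \<Rightarrow> 'm measure set" where
  "DeltaQ Q = {P. prob_space P \<and> sets P = sets Q \<and> absolutely_continuous Q P}"

text \<open>f-divergence D_f(P||Q) = integral of f(dP/dQ) dQ, as an extended real
  (positive part minus negative part).\<close>
definition fdiv :: "(real \<Rightarrow> real) \<Rightarrow> 'm measure \<Rightarrow> 'm measure \<Rightarrow> ereal" where
  "fdiv f P Q =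
     enn2ereal (\<integral>\<^sup>+ theta. ennreal (f (enn2real (RN_deriv Q P theta))) \<partial>Q)
   - enn2ereal (\<integral>\<^sup>+ theta. ennreal (- f (enn2real (RN_deriv Q P theta))) \<partial>Q)"

definition msupp :: "'m::topological_space measure \<Rightarrow> 'm set" where
  "msupp Q = {x \<in> space Q. \<forall>U. open U \<and> x \<in> U \<longrightarrow> emeasure Q (U \<inter> space Q) > 0}"

definition strict_convex_on :: "real set \<Rightarrow> (real \<Rightarrow> real) \<Rightarrow> bool" where
  "strict_convex_on S f \<longleftrightarrow> convex S \<and>
    (\<forall>x\<in>S. \<forall>y\<in>S. \<forall>u. x \<noteq> y \<and> 0 < u \<and> u < 1 \<longrightarrow>
        f (u * x + (1 - u) * y) < u * f x + (1 - u) * f y)"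

definition fdot_inv :: "(real \<Rightarrow> real) \<Rightarrow> real \<Rightarrow> real" where
  "fdot_inv f = inv_into {0<..} (deriv f)"

end

theory Submission
  imports Defs
begin

lemma tangent_le:
  assumes cvx: "convex_on {0..} f"
    and diff: "\<And>x. x > 0 \<Longrightarrow> f differentiable (at x)"
    and y: "y > 0" and x: "x \<ge> 0"
  shows "f y + deriv f y * (x - y) \<le> f x"
proof -
  have d: "(f has_real_derivative deriv f y) (at y within {0..})"
    using diff[OF y] DERIV_deriv_iff_real_differentiable has_field_derivative_at_within by blast
  have "deriv f y * (x - y) \<le> f x - f y"
    by (rule convex_on_imp_above_tangent[OF cvx _ _ _ d]) (use x y in \<open>auto simp: is_interval_connected\<close>)
  then show ?thesis by simp
qed

lemma tangent_less:
  assumes cvx: "convex_on {0..} f" and sc: "strict_convex_on {0..} f"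
    and diff: "\<And>x. x > 0 \<Longrightarrow> f differentiable (at x)"
    and y: "y > 0" and x: "x \<ge> 0" and ne: "x \<noteq> y"
  shows "f y + deriv f y * (x - y) < f x"
proof -
  define m where "m = (1/2) * x + (1 - 1/2) * y"
  have m: "m > 0" using x y by (simp add: m_def)
  have H: "\<forall>x\<in>{0..}. \<forall>y\<in>{0..}. \<forall>u. x \<noteq> y \<and> 0 < u \<and> u < 1 \<longrightarrow>
        f (u * x + (1 - u) * y) < u * f x + (1 - u) * f y"
    using sc unfolding strict_convex_on_def by blast
  have "f m < (1/2) * f x + (1 - 1/2) * f y"
    unfolding m_def using H[rule_format, of x y "1/2"] x y ne by simp
  moreover have "f y + deriv f y * (m - y) \<le> f m"
    using tangent_le[OF cvx diff y] m by simp
  ultimately show ?thesis unfolding m_def by (simp add: algebra_simps)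
qed

lemma deriv_strict_mono:
  assumes cvx: "convex_on {0..} f" and sc: "strict_convex_on {0..} f"
    and diff: "\<And>x. x > 0 \<Longrightarrow> f differentiable (at x)"
    and "0 < x" "x < y"
  shows "deriv f x < deriv f y"
proof -
  have "f x + deriv f x * (y - x) < f y" using tangent_less[OF cvx sc diff, of x y] assms by simp
  moreover have "f y + deriv f y * (x - y) < f x" using tangent_less[OF cvx sc diff, of y x] assms by simp
  ultimately have "(deriv f x - deriv f y) * (y - x) < 0" by (simp add: algebra_simps)
  with assms show ?thesis by (simp add: mult_less_0_iff)
qed

definition epw :: "(real \<Rightarrow> real) \<Rightarrow> real \<Rightarrow> real \<Rightarrow> real \<Rightarrow> real \<Rightarrow> real \<Rightarrow> ennreal" where
  "epw f lam beta l x y = ennreal (y * l) + ennreal lam * ennreal (f y) + ennreal lam * ennreal (- f x)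
     + ennreal (max beta 0) * ennreal y + ennreal (max (- beta) 0) * ennreal x"

lemma sum5: "0 \<le> (a::real) \<Longrightarrow> 0 \<le> b \<Longrightarrow> 0 \<le> c \<Longrightarrow> 0 \<le> d \<Longrightarrow> 0 \<le> e \<Longrightarrow>
  ennreal (a + b + c + d + e) = ennreal a + ennreal b + ennreal c + ennreal d + ennreal e"
  by simp

lemma epw_real:
  assumes "x \<ge> 0" "y \<ge> 0" "l \<ge> 0" "lam \<ge> 0"
  shows "epw f lam beta l x y = ennreal (y * l + lam * max (f y) 0 + lam * max (- f x) 0
     + max beta 0 * y + max (- beta) 0 * x)"
proof -
  have e: "ennreal (max a 0) = ennreal a" for a by (simp add: max_def ennreal_neg)
  have m: "ennreal (a * max b 0) = ennreal a * ennreal b" if "a \<ge> 0" for a b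
    using that by (simp add: ennreal_mult e)
  have m2: "ennreal (max b 0 * a) = ennreal (max b 0) * ennreal a" if "a \<ge> 0" for a b
    using that by (intro ennreal_mult) auto
  have "ennreal (y * l + lam * max (f y) 0 + lam * max (- f x) 0
     + max beta 0 * y + max (- beta) 0 * x) = ennreal (y * l) + ennreal (lam * max (f y) 0) + ennreal (lam * max (- f x) 0)
     + ennreal (max beta 0 * y) + ennreal (max (- beta) 0 * x)"
    using assms by (intro sum5) auto
  also have "\<dots> = epw f lam beta l x y"
    unfolding epw_def using assms by (simp only: m m2)
  finally show ?thesis by (rule sym)
qed

lemma epw_le:
  assumes cvx: "convex_on {0..} f" and sc: "strict_convex_on {0..} f"
    and diff: "\<And>x. x > 0 \<Longrightarrow> f differentiable (at x)"
    and lam: "lam > 0" and l: "l \<ge> 0" and x: "x \<ge> 0" and y: "y > 0"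
    and dy: "deriv f y = - (beta + l) / lam"
  shows "epw f lam beta l x y \<le> epw f lam beta l y x"
    and "x \<noteq> y \<Longrightarrow> epw f lam beta l x y < epw f lam beta l y x"
proof -
  define Lr where "Lr = y * l + lam * max (f y) 0 + lam * max (- f x) 0 + max beta 0 * y + max (- beta) 0 * x"
  define Rr where "Rr = x * l + lam * max (f x) 0 + lam * max (- f y) 0 + max beta 0 * x + max (- beta) 0 * y"
  have eL: "epw f lam beta l x y = ennreal Lr" unfolding Lr_def using x y l lam by (intro epw_real) auto
  have eR: "epw f lam beta l y x = ennreal Rr" unfolding Rr_def using x y l lam by (intro epw_real) auto
  have L0: "0 \<le> Lr" unfolding Lr_def using x y l lam by auto
  have t: "f y + deriv f y * (x - y) \<le> f x" by (rule tangent_le[OF cvx diff y x])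
  have mm: "max a 0 - max (- a) 0 = a" for a :: real by (simp add: max_def)
  have key: "Rr - Lr = (x * l + lam * f x + beta * x) - (y * l + lam * f y + beta * y)"
    unfolding Lr_def Rr_def using mm[of "f x"] mm[of "f y"] mm[of beta]
    by (smt (verit, ccfv_SIG) distrib_left left_diff_distrib)
  have lin: "lam * (deriv f y * (x - y)) = (beta + l) * (y - x)"
    using lam by (simp add: dy field_simps)
  have "lam * (f y + deriv f y * (x - y)) \<le> lam * f x" using t lam by simp
  then have "y * l + lam * f y + beta * y \<le> x * l + lam * f x + beta * x"
    using lin by (simp add: algebra_simps)
  then have "Lr \<le> Rr" using key by simp
  then show "epw f lam beta l x y \<le> epw f lam beta l y x"
    unfolding eL eR by (simp add: ennreal_leI)
  assume ne: "x \<noteq> y"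
  have t2: "f y + deriv f y * (x - y) < f x" by (rule tangent_less[OF cvx sc diff y x ne])
  have "lam * (f y + deriv f y * (x - y)) < lam * f x" using t2 lam by simp
  then have "y * l + lam * f y + beta * y < x * l + lam * f x + beta * x"
    using lin by (simp add: algebra_simps)
  then have "Lr < Rr" using key by simp
  then show "epw f lam beta l x y < epw f lam beta l y x"
    unfolding eL eR using L0 by (simp add: ennreal_less_iff)
qed

lemma meas_fcomp:
  fixes f :: "real \<Rightarrow> real" and p q L :: "'a \<Rightarrow> real"
  assumes diff: "\<And>x. x > 0 \<Longrightarrow> f differentiable (at x)"
    and p: "p \<in> borel_measurable M" and p0: "\<And>t. p t \<ge> 0"
  shows "(\<lambda>t. f (p t)) \<in> borel_measurable M"
proof -
  have c: "continuous_on {0<..} f"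
    by (intro continuous_at_imp_continuous_on ballI differentiable_imp_continuous_within diff) auto
  have h1: "(\<lambda>x. indicator {0<..} x *\<^sub>R f x) \<in> borel_measurable borel"
    by (rule borel_measurable_continuous_on_indicator[OF _ c]) (metis borel_open open_greaterThan)
  have h2: "(\<lambda>x::real. indicator {..0} x *\<^sub>R f 0) \<in> borel_measurable borel"
    by measurable
  define h where "h x = indicator {0<..} x *\<^sub>R f x + indicator {..0} x *\<^sub>R f 0" for x :: real
  have hm: "h \<in> borel_measurable borel" unfolding h_def using h1 h2 by measurable
  have "(\<lambda>t. h (p t)) \<in> borel_measurable M" using measurable_compose[OF p hm] by (simp add: comp_def)
  moreover have "h (p t) = f (p t)" for t
    using p0[of t] by (cases "p t = 0") (auto simp: h_def indicator_def)
  ultimately show ?thesis by simp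
qed

lemma int_epw:
  fixes f :: "real \<Rightarrow> real" and p q L :: "'a \<Rightarrow> real"
  assumes diff: "\<And>x. x > 0 \<Longrightarrow> f differentiable (at x)"
    and L: "L \<in> borel_measurable M"
    and p: "p \<in> borel_measurable M" and p0: "\<And>t. p t \<ge> 0"
    and q: "q \<in> borel_measurable M" and q0: "\<And>t. q t \<ge> 0"
  shows "(\<integral>\<^sup>+ t. epw f lam beta (L t) (p t) (q t) \<partial>M) =
     (\<integral>\<^sup>+ t. ennreal (q t * L t) \<partial>M) + ennreal lam * (\<integral>\<^sup>+ t. ennreal (f (q t)) \<partial>M)
     + ennreal lam * (\<integral>\<^sup>+ t. ennreal (- f (p t)) \<partial>M)
     + ennreal (max beta 0) * (\<integral>\<^sup>+ t. ennreal (q t) \<partial>M)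
     + ennreal (max (- beta) 0) * (\<integral>\<^sup>+ t. ennreal (p t) \<partial>M)"
proof -
  have fp: "(\<lambda>t. f (p t)) \<in> borel_measurable M" by (rule meas_fcomp[OF diff p p0])
  have fq: "(\<lambda>t. f (q t)) \<in> borel_measurable M" by (rule meas_fcomp[OF diff q q0])
  show ?thesis unfolding epw_def
    using fp fq L p q
    by (simp add: nn_integral_add nn_integral_cmult)
qed

lemma meas_epw:
  fixes f :: "real \<Rightarrow> real" and p q L :: "'a \<Rightarrow> real"
  assumes diff: "\<And>x. x > 0 \<Longrightarrow> f differentiable (at x)"
    and L: "L \<in> borel_measurable M"
    and p: "p \<in> borel_measurable M" and p0: "\<And>t. p t \<ge> 0"
    and q: "q \<in> borel_measurable M" and q0: "\<And>t. q t \<ge> 0"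
  shows "(\<lambda>t. epw f lam beta (L t) (p t) (q t)) \<in> borel_measurable M"
proof -
  have fp: "(\<lambda>t. f (p t)) \<in> borel_measurable M" by (rule meas_fcomp[OF diff p p0])
  have fq: "(\<lambda>t. f (q t)) \<in> borel_measurable M" by (rule meas_fcomp[OF diff q q0])
  show ?thesis unfolding epw_def using fp fq L p q by measurable
qed

lemma core:
  fixes f :: "real \<Rightarrow> real" and p q L :: "'a \<Rightarrow> real"
  assumes cvx: "convex_on {0..} f" and sc: "strict_convex_on {0..} f"
    and diff: "\<And>x. x > 0 \<Longrightarrow> f differentiable (at x)"
    and lam: "lam > 0"
    and L: "L \<in> borel_measurable M" and L0: "\<And>t. L t \<ge> 0"
    and p: "p \<in> borel_measurable M" and p0: "\<And>t. p t \<ge> 0"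
    and q: "q \<in> borel_measurable M" and q0: "\<And>t. q t \<ge> 0"
    and opt: "AE t in M. q t > 0 \<and> deriv f (q t) = - (beta + L t) / lam"
  shows "(\<integral>\<^sup>+ t. epw f lam beta (L t) (p t) (q t) \<partial>M) \<le> (\<integral>\<^sup>+ t. epw f lam beta (L t) (q t) (p t) \<partial>M)"
    and "(\<integral>\<^sup>+ t. epw f lam beta (L t) (q t) (p t) \<partial>M) \<le> (\<integral>\<^sup>+ t. epw f lam beta (L t) (p t) (q t) \<partial>M)
      \<Longrightarrow> (\<integral>\<^sup>+ t. epw f lam beta (L t) (p t) (q t) \<partial>M) < \<infinity> \<Longrightarrow> AE t in M. p t = q t"
proof -
  let ?u = "\<lambda>t. epw f lam beta (L t) (p t) (q t)"
  let ?v = "\<lambda>t. epw f lam beta (L t) (q t) (p t)"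
  have um: "?u \<in> borel_measurable M" by (rule meas_epw[OF diff L p p0 q q0])
  have vm: "?v \<in> borel_measurable M" by (rule meas_epw[OF diff L q q0 p p0])
  have AEle: "AE t in M. ?u t \<le> ?v t"
    using opt
  proof eventually_elim
    case (elim t) then show ?case by (intro epw_le(1)[OF cvx sc diff lam L0 p0]) simp_all
  qed
  have AEless: "AE t in M. p t \<noteq> q t \<longrightarrow> ?u t < ?v t"
    using opt
  proof eventually_elim
    case (elim t) then show ?case using epw_le(2)[OF cvx sc diff lam L0 p0, of "q t" beta t] by simp
  qed
  show "integral\<^sup>N M ?u \<le> integral\<^sup>N M ?v" by (rule nn_integral_mono_AE[OF AEle])
  assume le: "integral\<^sup>N M ?v \<le> integral\<^sup>N M ?u" and fin: "integral\<^sup>N M ?u < \<infinity>"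
  have "integral\<^sup>N M ?v = (\<integral>\<^sup>+ t. ?u t + (?v t - ?u t) \<partial>M)"
    using AEle by (intro nn_integral_cong_AE) (auto elim!: eventually_mono simp: add_diff_inverse_ennreal)
  also have "\<dots> = integral\<^sup>N M ?u + (\<integral>\<^sup>+ t. (?v t - ?u t) \<partial>M)"
    by (rule nn_integral_add[OF um borel_measurable_minus_ennreal[OF vm um]])
  finally have "integral\<^sup>N M ?u + (\<integral>\<^sup>+ t. (?v t - ?u t) \<partial>M) \<le> integral\<^sup>N M ?u + 0"
    using le by simp
  then have "(\<integral>\<^sup>+ t. (?v t - ?u t) \<partial>M) \<le> 0"
    using fin ennreal_add_left_cancel_le by auto
  then have "(\<integral>\<^sup>+ t. (?v t - ?u t) \<partial>M) = 0" by simp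
  then have "AE t in M. ?v t - ?u t = 0"
    using nn_integral_0_iff_AE[OF borel_measurable_minus_ennreal[OF vm um]] by simp
  then show "AE t in M. p t = q t"
    using AEless AEle
  proof eventually_elim
    case (elim t) then show ?case using ennreal_minus_eq_0[of "?v t" "?u t"] by force
  qed
qed

lemma ereal_cmp:
  fixes A B :: ennreal and a b :: real
  assumes "a \<ge> 0" "b \<ge> 0"
  shows "(enn2ereal A - ereal a \<le> enn2ereal B - ereal b) \<longleftrightarrow> (A + ennreal b \<le> B + ennreal a)"
proof (cases A rule: ennreal_cases)
  case (real r)
  note A = this
  then show ?thesis
  proof (cases B rule: ennreal_cases)
    case (real s)
    then show ?thesis using A assms
      by (simp add: ennreal_plus[symmetric] enn2ereal_ennreal del: ennreal_plus) (auto simp: ennreal_le_iff)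
  next
    case top
    then show ?thesis using assms by simp
  qed
next
  case top
  then show ?thesis
    using assms by (cases B rule: ennreal_cases) (auto simp: ennreal_plus[symmetric] top_unique simp del: ennreal_plus)
qed

lemma V_expr:
  fixes TL Ip In :: ennreal and lam :: real
  assumes "lam > 0" "In < \<infinity>"
  shows "enn2ereal TL + ereal lam * (enn2ereal Ip - enn2ereal In)
     = enn2ereal (TL + ennreal lam * Ip) - ereal (lam * enn2real In)"
proof -
  obtain n where n: "In = ennreal n" "n \<ge> 0" using assms(2) by (cases In rule: ennreal_cases) auto
  show ?thesis
  proof (cases TL rule: ennreal_cases)
    case (real r)
    note T = this
    show ?thesis
    proof (cases Ip rule: ennreal_cases)
      case (real s)
      then show ?thesis using T n assms
        by (simp add: ennreal_mult[symmetric] ennreal_plus[symmetric] enn2ereal_ennreal algebra_simps del: ennreal_plus)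
    next
      case top
      then show ?thesis using \<open>TL = ennreal r\<close> n assms by (simp add: ennreal_mult_top)
    qed
  next
    case top
    then show ?thesis using n assms by (cases Ip rule: ennreal_cases) (auto simp: ennreal_mult_top)
  qed
qed

lemma nn_bounded_fin:
  fixes u :: "'a \<Rightarrow> real"
  assumes "prob_space M" and "\<And>t. u t \<le> c"
  shows "(\<integral>\<^sup>+ t. ennreal (u t) \<partial>M) < \<infinity>"
proof -
  interpret prob_space M by fact
  have "(\<integral>\<^sup>+ t. ennreal (u t) \<partial>M) \<le> (\<integral>\<^sup>+ t. ennreal c \<partial>M)"
    using assms(2) by (intro nn_integral_mono) (simp add: ennreal_leI)
  also have "\<dots> = ennreal c" by (simp add: emeasure_space_1)
  finally show ?thesis by (simp add: order_le_less_trans)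
qed

lemma In_fin:
  fixes f :: "real \<Rightarrow> real" and p :: "'a \<Rightarrow> real"
  assumes cvx: "convex_on {0..} f"
    and diff: "\<And>x. x > 0 \<Longrightarrow> f differentiable (at x)" and f1: "f 1 = 0"
    and M: "prob_space M"
    and p: "p \<in> borel_measurable M" and p0: "\<And>t. p t \<ge> 0"
    and pint: "(\<integral>\<^sup>+ t. ennreal (p t) \<partial>M) = 1"
  shows "(\<integral>\<^sup>+ t. ennreal (- f (p t)) \<partial>M) < \<infinity>"
proof -
  interpret prob_space M by fact
  define k where "k = \<bar>deriv f 1\<bar>"
  have b: "- f (p t) \<le> k * 1 + k * p t" for t
  proof -
    have "f 1 + deriv f 1 * (p t - 1) \<le> f (p t)" by (rule tangent_le[OF cvx diff]) (use p0 in auto)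
    moreover have "- (deriv f 1 * (p t - 1)) \<le> k * 1 + k * p t"
    proof -
      have "- deriv f 1 * p t \<le> k * p t" by (rule mult_right_mono) (auto simp: k_def p0)
      moreover have "deriv f 1 \<le> k" by (simp add: k_def)
      ultimately show ?thesis by (simp add: algebra_simps)
    qed
    ultimately show ?thesis using f1 by simp
  qed
  have "(\<integral>\<^sup>+ t. ennreal (- f (p t)) \<partial>M) \<le> (\<integral>\<^sup>+ t. ennreal k * 1 + ennreal k * ennreal (p t) \<partial>M)"
    using b p0 k_def by (intro nn_integral_mono) (simp add: ennreal_mult[symmetric] ennreal_plus[symmetric] ennreal_leI del: ennreal_plus)
  also have "\<dots> = ennreal k * 1 + ennreal k * 1"
    using p pint by (simp add: nn_integral_add nn_integral_cmult emeasure_space_1)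
  finally show ?thesis by (simp add: order_le_less_trans ennreal_mult_less_top)
qed

lemma dens_rep:
  assumes Q: "prob_space Q" and P: "P \<in> DeltaQ Q"
  shows "(\<lambda>t. enn2real (RN_deriv Q P t)) \<in> borel_measurable Q"
    and "P = density Q (\<lambda>t. ennreal (enn2real (RN_deriv Q P t)))"
    and "(\<integral>\<^sup>+ t. ennreal (enn2real (RN_deriv Q P t)) \<partial>Q) = 1"
proof -
  interpret Q: prob_space Q by fact
  have Pp: "prob_space P" and Ps: "sets P = sets Q" and Pac: "absolutely_continuous Q P"
    using P by (auto simp: DeltaQ_def)
  show m: "(\<lambda>t. enn2real (RN_deriv Q P t)) \<in> borel_measurable Q" by measurable
  have fin: "AE t in Q. RN_deriv Q P t \<noteq> \<infinity>"
    by (rule Q.RN_deriv_finite[OF prob_space_imp_sigma_finite[OF Pp] Pac Ps])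
  have "density Q (RN_deriv Q P) = P" by (rule Q.density_RN_deriv[OF Pac Ps])
  moreover have "density Q (RN_deriv Q P) = density Q (\<lambda>t. ennreal (enn2real (RN_deriv Q P t)))"
    by (rule density_cong) (use fin in \<open>auto elim!: eventually_mono simp: ennreal_enn2real_if\<close>)
  ultimately show eq: "P = density Q (\<lambda>t. ennreal (enn2real (RN_deriv Q P t)))" by simp
  have "emeasure P (space P) = 1" using Pp by (simp add: prob_space.emeasure_space_1)
  then have "emeasure (density Q (\<lambda>t. ennreal (enn2real (RN_deriv Q P t)))) (space Q) = 1"
    using eq Ps sets_eq_imp_space_eq by metis
  moreover have "emeasure (density Q (\<lambda>t. ennreal (enn2real (RN_deriv Q P t)))) (space Q)
     = (\<integral>\<^sup>+ t. ennreal (enn2real (RN_deriv Q P t)) * indicator (space Q) t \<partial>Q)"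
    by (rule emeasure_density) (use m in auto)
  moreover have "\<dots> = (\<integral>\<^sup>+ t. ennreal (enn2real (RN_deriv Q P t)) \<partial>Q)"
    by (rule nn_integral_cong) simp
  ultimately show "(\<integral>\<^sup>+ t. ennreal (enn2real (RN_deriv Q P t)) \<partial>Q) = 1" by simp
qed

definition Xf :: "(real \<Rightarrow> real) \<Rightarrow> real \<Rightarrow> ('a \<Rightarrow> real) \<Rightarrow> 'a measure \<Rightarrow> ('a \<Rightarrow> real) \<Rightarrow> ennreal" where
  "Xf f lam L M p = (\<integral>\<^sup>+ t. ennreal (p t * L t) \<partial>M) + ennreal lam * (\<integral>\<^sup>+ t. ennreal (f (p t)) \<partial>M)"

definition Ineg :: "(real \<Rightarrow> real) \<Rightarrow> 'a measure \<Rightarrow> ('a \<Rightarrow> real) \<Rightarrow> ennreal" where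
  "Ineg f M p = (\<integral>\<^sup>+ t. ennreal (- f (p t)) \<partial>M)"

lemma value_rep:
  fixes f :: "real \<Rightarrow> real"
  assumes cvx: "convex_on {0..} f"
    and diff: "\<And>x. x > 0 \<Longrightarrow> f differentiable (at x)" and f1: "f 1 = 0"
    and Q: "prob_space Q" and P: "P \<in> DeltaQ Q" and lam: "lam > 0"
    and L: "emp_risk ell h z \<in> borel_measurable Q"
  shows "exp_risk ell h z P + ereal lam * fdiv f P Q
    = enn2ereal (Xf f lam (emp_risk ell h z) Q (\<lambda>t. enn2real (RN_deriv Q P t)))
      - ereal (lam * enn2real (Ineg f Q (\<lambda>t. enn2real (RN_deriv Q P t))))"
    and "Ineg f Q (\<lambda>t. enn2real (RN_deriv Q P t)) < \<infinity>"
proof -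
  define p where "p t = enn2real (RN_deriv Q P t)" for t
  have pm: "p \<in> borel_measurable Q" unfolding p_def by (rule dens_rep(1)[OF Q P])
  have Peq: "P = density Q (\<lambda>t. ennreal (p t))" unfolding p_def by (rule dens_rep(2)[OF Q P])
  have pint: "(\<integral>\<^sup>+ t. ennreal (p t) \<partial>Q) = 1" unfolding p_def by (rule dens_rep(3)[OF Q P])
  have p0: "\<And>t. p t \<ge> 0" unfolding p_def by simp
  have fin: "Ineg f Q p < \<infinity>" unfolding Ineg_def by (rule In_fin[OF cvx diff f1 Q pm p0 pint])
  then show "Ineg f Q (\<lambda>t. enn2real (RN_deriv Q P t)) < \<infinity>" unfolding p_def .
  have "(\<integral>\<^sup>+ t. ennreal (emp_risk ell h z t) \<partial>P) = (\<integral>\<^sup>+ t. ennreal (emp_risk ell h z t) \<partial>density Q (\<lambda>t. ennreal (p t)))"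
    using arg_cong[OF Peq, of "\<lambda>M. \<integral>\<^sup>+ t. ennreal (emp_risk ell h z t) \<partial>M"] .
  also have "\<dots> = (\<integral>\<^sup>+ t. ennreal (p t) * ennreal (emp_risk ell h z t) \<partial>Q)"
    using pm L by (intro nn_integral_density) auto
  also have "\<dots> = (\<integral>\<^sup>+ t. ennreal (p t * emp_risk ell h z t) \<partial>Q)"
    using p0 by (simp add: ennreal_mult')
  finally have er: "exp_risk ell h z P = enn2ereal (\<integral>\<^sup>+ t. ennreal (p t * emp_risk ell h z t) \<partial>Q)"
    unfolding exp_risk_def by simp
  have fd: "fdiv f P Q = enn2ereal (\<integral>\<^sup>+ t. ennreal (f (p t)) \<partial>Q) - enn2ereal (Ineg f Q p)"
    unfolding fdiv_def Ineg_def p_def ..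
  show "exp_risk ell h z P + ereal lam * fdiv f P Q
    = enn2ereal (Xf f lam (emp_risk ell h z) Q (\<lambda>t. enn2real (RN_deriv Q P t)))
      - ereal (lam * enn2real (Ineg f Q (\<lambda>t. enn2real (RN_deriv Q P t))))"
    unfolding er fd Xf_def p_def[symmetric] by (rule V_expr[OF lam fin])
qed

lemma cmp:
  fixes f :: "real \<Rightarrow> real" and p q L :: "'a \<Rightarrow> real"
  assumes cvx: "convex_on {0..} f" and sc: "strict_convex_on {0..} f"
    and dA: "\<forall>x>0. f differentiable (at x)" and f1: "f 1 = 0"
    and lam: "lam > 0" and Q: "prob_space Q"
    and L: "L \<in> borel_measurable Q" and L0: "\<And>t. L t \<ge> 0"
    and p: "p \<in> borel_measurable Q" and p0: "\<And>t. p t \<ge> 0"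
    and pint: "(\<integral>\<^sup>+ t. ennreal (p t) \<partial>Q) = 1"
    and q: "q \<in> borel_measurable Q" and q0: "\<And>t. q t \<ge> 0"
    and qint: "(\<integral>\<^sup>+ t. ennreal (q t) \<partial>Q) = 1"
    and opt: "AE t in Q. q t > 0 \<and> deriv f (q t) = - (beta + L t) / lam"
  shows "enn2ereal (Xf f lam L Q q) - ereal (lam * enn2real (Ineg f Q q))
       \<le> enn2ereal (Xf f lam L Q p) - ereal (lam * enn2real (Ineg f Q p))"
    and "enn2ereal (Xf f lam L Q p) - ereal (lam * enn2real (Ineg f Q p))
       \<le> enn2ereal (Xf f lam L Q q) - ereal (lam * enn2real (Ineg f Q q))
       \<Longrightarrow> Xf f lam L Q q < \<infinity> \<Longrightarrow> AE t in Q. p t = q t"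
proof -
  have diff: "\<And>x. x > 0 \<Longrightarrow> f differentiable (at x)" using dA by blast
  have ip: "Ineg f Q p < \<infinity>" unfolding Ineg_def by (rule In_fin[OF cvx diff f1 Q p p0 pint])
  have iq: "Ineg f Q q < \<infinity>" unfolding Ineg_def by (rule In_fin[OF cvx diff f1 Q q q0 qint])
  have lp: "ennreal (lam * enn2real (Ineg f Q p)) = ennreal lam * Ineg f Q p"
    using ip lam by (simp add: ennreal_mult ennreal_enn2real)
  have lq: "ennreal (lam * enn2real (Ineg f Q q)) = ennreal lam * Ineg f Q q"
    using iq lam by (simp add: ennreal_mult ennreal_enn2real)
  define C where "C = ennreal (max beta 0) + ennreal (max (- beta) 0)"
  have Cfin: "C \<noteq> \<infinity>" unfolding C_def by simp
  have E1: "(\<integral>\<^sup>+ t. epw f lam beta (L t) (p t) (q t) \<partial>Q) = (Xf f lam L Q q + ennreal lam * Ineg f Q p) + C"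
    using int_epw[OF diff L p p0 q q0, of lam beta] pint qint by (simp add: Xf_def Ineg_def C_def ac_simps)
  have E2: "(\<integral>\<^sup>+ t. epw f lam beta (L t) (q t) (p t) \<partial>Q) = (Xf f lam L Q p + ennreal lam * Ineg f Q q) + C"
    using int_epw[OF diff L q q0 p p0, of lam beta] pint qint by (simp add: Xf_def Ineg_def C_def ac_simps)
  have ca: "a + C \<le> b + C \<longleftrightarrow> a \<le> b" for a b
    using Cfin ennreal_add_left_cancel_le[of C a b] by (simp add: ac_simps)
  have lam0: "lam * enn2real (Ineg f Q q) \<ge> 0" "lam * enn2real (Ineg f Q p) \<ge> 0" using lam by auto
  have "(\<integral>\<^sup>+ t. epw f lam beta (L t) (p t) (q t) \<partial>Q) \<le> (\<integral>\<^sup>+ t. epw f lam beta (L t) (q t) (p t) \<partial>Q)"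
    by (rule core(1)[OF cvx sc diff lam L L0 p p0 q q0 opt])
  then have "Xf f lam L Q q + ennreal (lam * enn2real (Ineg f Q p)) \<le> Xf f lam L Q p + ennreal (lam * enn2real (Ineg f Q q))"
    unfolding E1 E2 ca lp lq .
  then show "enn2ereal (Xf f lam L Q q) - ereal (lam * enn2real (Ineg f Q q))
       \<le> enn2ereal (Xf f lam L Q p) - ereal (lam * enn2real (Ineg f Q p))"
    using ereal_cmp[OF lam0] by blast
  assume le: "enn2ereal (Xf f lam L Q p) - ereal (lam * enn2real (Ineg f Q p))
       \<le> enn2ereal (Xf f lam L Q q) - ereal (lam * enn2real (Ineg f Q q))"
    and xq: "Xf f lam L Q q < \<infinity>"
  have "Xf f lam L Q p + ennreal (lam * enn2real (Ineg f Q q)) \<le> Xf f lam L Q q + ennreal (lam * enn2real (Ineg f Q p))"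
    using le ereal_cmp[OF lam0(2) lam0(1)] by blast
  then have le2: "(\<integral>\<^sup>+ t. epw f lam beta (L t) (q t) (p t) \<partial>Q) \<le> (\<integral>\<^sup>+ t. epw f lam beta (L t) (p t) (q t) \<partial>Q)"
    unfolding E1 E2 ca lp lq .
  have fin: "(\<integral>\<^sup>+ t. epw f lam beta (L t) (p t) (q t) \<partial>Q) < \<infinity>"
    unfolding E1 using xq ip Cfin by (simp add: ennreal_mult_less_top less_top)
  show "AE t in Q. p t = q t"
    by (rule core(2)[OF cvx sc diff lam L L0 p p0 q q0 opt le2 fin])
qed

lemma msupp_facts:
  fixes Q :: "'m::euclidean_space measure"
  assumes Qs: "sets Q = sets (restrict_space borel Ms)"
  shows "msupp Q \<in> sets Q" and "AE t in Q. t \<in> msupp Q"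
proof -
  have sp: "space Q = Ms"
    using sets_eq_imp_space_eq[OF Qs] by (simp add: space_restrict_space)
  have os: "U \<inter> space Q \<in> sets Q" if "open U" for U
  proof -
    have "U \<in> sets borel" using that by simp
    then have "Ms \<inter> U \<in> sets (restrict_space borel Ms)"
      by (auto simp: sets_restrict_space)
    then show ?thesis using Qs sp by (simp add: Int_commute)
  qed
  define F where "F = {U. open U \<and> emeasure Q (U \<inter> space Q) = 0}"
  obtain F' where F': "F' \<subseteq> F" "countable F'" "\<Union>F' = \<Union>F"
    using Lindelof[of F] unfolding F_def by blast
  define N where "N = (\<Union>U\<in>F'. U \<inter> space Q)"
  have Nnull: "N \<in> null_sets Q"
    unfolding N_def
  proof (rule null_sets_UN'[OF F'(2)])
    fix U assume "U \<in> F'"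
    then have "U \<in> F" using F' by auto
    then show "U \<inter> space Q \<in> null_sets Q" using os unfolding F_def by auto
  qed
  have Neq: "N = space Q - msupp Q"
  proof
    show "N \<subseteq> space Q - msupp Q"
    proof
      fix x assume "x \<in> N"
      then obtain U where U: "U \<in> F" "x \<in> U" "x \<in> space Q" using F' unfolding N_def by auto
      then show "x \<in> space Q - msupp Q" unfolding msupp_def F_def by auto
    qed
    show "space Q - msupp Q \<subseteq> N"
    proof
      fix x assume x: "x \<in> space Q - msupp Q"
      then obtain U where U: "open U" "x \<in> U" "\<not> emeasure Q (U \<inter> space Q) > 0"
        unfolding msupp_def by auto
      then have "U \<in> F" unfolding F_def by (simp add: not_gr_zero)
      then have "x \<in> \<Union>F'" using F'(3) U(2) by auto
      then show "x \<in> N" using x unfolding N_def by auto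
    qed
  qed
  have "msupp Q = space Q - N" using Neq by (auto simp: msupp_def)
  then show "msupp Q \<in> sets Q" using Nnull by auto
  show "AE t in Q. t \<in> msupp Q"
    by (rule AE_I'[OF Nnull]) (auto simp: Neq)
qed

lemma G_meas:
  fixes f :: "real \<Rightarrow> real" and g a :: "'a \<Rightarrow> real"
  assumes cvx: "convex_on {0..} f" and sc: "strict_convex_on {0..} f"
    and diff: "\<And>x. x > 0 \<Longrightarrow> f differentiable (at x)"
    and S: "S \<in> sets M" and a: "a \<in> borel_measurable M"
    and g: "\<And>t. t \<in> S \<Longrightarrow> g t > 0 \<and> deriv f (g t) = a t"
  shows "(\<lambda>t. if t \<in> S then g t else 0) \<in> borel_measurable M"
proof -
  have Ssub: "S \<subseteq> space M" using S sets.sets_into_space by blast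
  show ?thesis unfolding borel_measurable_iff_greater
  proof
    fix c :: real
    show "{w \<in> space M. c < (if w \<in> S then g w else 0)} \<in> sets M"
    proof (cases "c < 0")
      case True
      then have "{w \<in> space M. c < (if w \<in> S then g w else 0)} = space M"
        using g by (auto, smt (verit))
      then show ?thesis by simp
    next
      case False
      show ?thesis
      proof (cases "c = 0")
        case True
        then have "{w \<in> space M. c < (if w \<in> S then g w else 0)} = S"
          using g Ssub by auto
        then show ?thesis using S by simp
      next
        case False
        then have c: "c > 0" using \<open>\<not> c < 0\<close> by simp
        have "{w \<in> space M. c < (if w \<in> S then g w else 0)} = S \<inter> {w \<in> space M. deriv f c < a w}"
        proof -
          have "c < g w \<longleftrightarrow> deriv f c < a w" if "w \<in> S" for w
          proof
            assume "c < g w"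
            then show "deriv f c < a w" using deriv_strict_mono[OF cvx sc diff c, of "g w"] g[OF that] by simp
          next
            assume h: "deriv f c < a w"
            show "c < g w"
            proof (rule ccontr)
              assume "\<not> c < g w"
              then have "g w = c \<or> g w < c" by auto
              then have "deriv f (g w) \<le> deriv f c"
                using deriv_strict_mono[OF cvx sc diff, of "g w" c] g[OF that] by auto
              then show False using h g[OF that] by simp
            qed
          qed
          then show ?thesis using Ssub c by auto
        qed
        moreover have "{w \<in> space M. deriv f c < a w} \<in> sets M" using a by measurable
        ultimately show ?thesis using S by simp
      qed
    qed
  qed
qed

lemma exists_finite_p:
  fixes f :: "real \<Rightarrow> real" and L :: "'a \<Rightarrow> real"
  assumes Q: "prob_space Q" and L: "L \<in> borel_measurable Q" and L0: "\<And>t. L t \<ge> 0"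
  shows "\<exists>p. p \<in> borel_measurable Q \<and> (\<forall>t. p t \<ge> 0) \<and> (\<integral>\<^sup>+ t. ennreal (p t) \<partial>Q) = 1
      \<and> Xf f lam L Q p < \<infinity>"
proof -
  interpret Q: prob_space Q by fact
  define A where "A n = {t \<in> space Q. L t \<le> real n}" for n :: nat
  have As: "A n \<in> sets Q" for n unfolding A_def using L by measurable
  have "\<exists>n. emeasure Q (A n) \<noteq> 0"
  proof (rule ccontr)
    assume "\<not> ?thesis"
    then have "A n \<in> null_sets Q" for n using As by auto
    then have "(\<Union>n. A n) \<in> null_sets Q" by (rule null_sets_UN)
    moreover have "(\<Union>n. A n) = space Q"
      unfolding A_def by (auto intro: real_nat_ceiling_ge)
    ultimately show False using Q.emeasure_space_1 by auto
  qed
  then obtain n where n: "emeasure Q (A n) \<noteq> 0" by blast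
  define K where "K = real n"
  define qA where "qA = measure Q (A n)"
  have qA: "qA > 0" using n Q.emeasure_eq_measure[of "A n"] measure_nonneg[of Q "A n"]
    unfolding qA_def by (metis ennreal_0 less_eq_real_def)
  define p where "p t = indicator (A n) t / qA" for t
  have pm: "p \<in> borel_measurable Q" unfolding p_def using As by measurable
  have p0: "\<forall>t. p t \<ge> 0" unfolding p_def using qA by simp
  have pe: "ennreal (p t) = ennreal (1 / qA) * indicator (A n) t" for t
    unfolding p_def by (cases "t \<in> A n") auto
  have "(\<integral>\<^sup>+ t. ennreal (p t) \<partial>Q) = ennreal (1 / qA) * emeasure Q (A n)"
    unfolding pe using As by (simp add: nn_integral_cmult_indicator)
  also have "\<dots> = 1" using qA Q.emeasure_eq_measure[of "A n"] unfolding qA_def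
    by (simp add: ennreal_mult[symmetric])
  finally have pint: "(\<integral>\<^sup>+ t. ennreal (p t) \<partial>Q) = 1" .
  have b1: "p t * L t \<le> K / qA" for t
  proof (cases "t \<in> A n")
    case True
    then have "L t \<le> K" unfolding A_def K_def by auto
    then show ?thesis using True qA unfolding p_def by (simp add: divide_right_mono)
  next
    case False
    then show ?thesis using qA unfolding p_def K_def by simp
  qed
  have b2: "f (p t) \<le> max (f 0) (f (1 / qA))" for t
    unfolding p_def by (cases "t \<in> A n") auto
  have f1: "(\<integral>\<^sup>+ t. ennreal (p t * L t) \<partial>Q) < \<infinity>" by (rule nn_bounded_fin[OF Q b1])
  have f2: "(\<integral>\<^sup>+ t. ennreal (f (p t)) \<partial>Q) < \<infinity>" by (rule nn_bounded_fin[OF Q b2])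
  have "Xf f lam L Q p < \<infinity>" unfolding Xf_def using f1 f2
    by (simp add: ennreal_mult_less_top less_top)
  then show ?thesis using pm p0 pint by blast
qed


theorem theorem1:
  fixes Ms :: "'m::euclidean_space set"
    and h :: "'m \<Rightarrow> 'x \<Rightarrow> 'y"
    and ell :: "'y \<Rightarrow> 'y \<Rightarrow> real"
    and z :: "('x \<times> 'y) list"
    and f :: "real \<Rightarrow> real"
    and Q :: "'m measure"
    and lam :: real
    and beta :: real
  assumes ell_nonneg: "\<And>y y'. ell y y' \<ge> 0"
    and ell_refl: "\<And>y. ell y y = 0"
    and f_convex: "convex_on {0..} f"
    and f_one: "f 1 = 0"
    and f_zero: "(f \<longlongrightarrow> f 0) (at_right 0)"
    and Q_sets: "sets Q = sets (restrict_space borel Ms)"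
    and Q_prob: "prob_space Q"
    and lam_pos: "lam > 0"
    and L_meas: "emp_risk ell h z \<in> borel_measurable Q"
    \<comment> \<open>assumption (a)\<close>
    and a_strict: "strict_convex_on {0..} f"
    and a_diff: "\<And>x. x > 0 \<Longrightarrow> f differentiable (at x)"
    \<comment> \<open>assumption (b)\<close>
    and b_range: "\<And>theta. theta \<in> msupp Q \<Longrightarrow>
                    - (beta + emp_risk ell h z theta) / lam \<in> deriv f ` {0<..}"
    and b_pos: "\<And>theta. theta \<in> msupp Q \<Longrightarrow>
                    0 < fdot_inv f (- (beta + emp_risk ell h z theta) / lam)"
    and b_int: "(\<integral>\<^sup>+ theta. ennreal (fdot_inv f (- (beta + emp_risk ell h z theta) / lam))
                    * indicator (msupp Q) theta \<partial>Q) = 1"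
  shows "\<exists>Pstar.
     \<comment> \<open>(i) unique solution of the regularized problem\<close>
     (Pstar \<in> DeltaQ Q
      \<and> (\<forall>P \<in> DeltaQ Q. exp_risk ell h z Pstar + ereal lam * fdiv f Pstar Q
                        \<le> exp_risk ell h z P + ereal lam * fdiv f P Q)
      \<and> (\<forall>P \<in> DeltaQ Q. exp_risk ell h z P + ereal lam * fdiv f P Q
                        \<le> exp_risk ell h z Pstar + ereal lam * fdiv f Pstar Q \<longrightarrow> P = Pstar))
     \<and> (\<exists>d \<in> borel_measurable Q. Pstar = density Q d \<and>
          (\<forall>theta \<in> msupp Q.
             d theta = ennreal (fdot_inv f (- (beta + emp_risk ell h z theta) / lam))))
     \<comment> \<open>(ii) under separability (c), Pstar also uniquely solves the constrained problem\<close>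
     \<and> ((\<exists>c > 0. \<exists>M1 M2. M1 \<subseteq> Ms \<and> M2 \<subseteq> Ms \<and> M1 \<in> sets Q \<and> M2 \<in> sets Q
            \<and> emeasure Q M1 > 0 \<and> emeasure Q M2 > 0
            \<and> (\<forall>t1 \<in> M1. \<forall>t2 \<in> M2. emp_risk ell h z t1 < c \<and> c < emp_risk ell h z t2))
        \<longrightarrow> (\<forall>eta::real. eta \<ge> 0 \<longrightarrow> fdiv f Pstar Q = ereal eta \<longrightarrow>
              fdiv f Pstar Q \<le> ereal eta
              \<and> (\<forall>P \<in> DeltaQ Q. fdiv f P Q \<le> ereal eta \<longrightarrow>
                    exp_risk ell h z Pstar \<le> exp_risk ell h z P)
              \<and> (\<forall>P \<in> DeltaQ Q. fdiv f P Q \<le> ereal eta \<longrightarrow>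
                    exp_risk ell h z P \<le> exp_risk ell h z Pstar \<longrightarrow> P = Pstar)))"
proof -
  interpret Qp: prob_space Q by (rule Q_prob)
  define L where "L = emp_risk ell h z"
  have Lm: "L \<in> borel_measurable Q" unfolding L_def by (rule L_meas)
  have L0: "L t \<ge> 0" for t
    unfolding L_def emp_risk_def using ell_nonneg by (simp add: sum_nonneg)
  define S where "S = msupp Q"
  have Ss: "S \<in> sets Q" and AES: "AE t in Q. t \<in> S"
    unfolding S_def by (rule msupp_facts[OF Q_sets])+
  define a where "a t = - (beta + L t) / lam" for t
  have am: "a \<in> borel_measurable Q" unfolding a_def using Lm by measurable
  define g where "g t = fdot_inv f (a t)" for t
  have gS: "g t > 0 \<and> deriv f (g t) = a t" if "t \<in> S" for t
  proof
    show "g t > 0" using b_pos[of t] that unfolding g_def a_def L_def S_def by simp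
    have "a t \<in> deriv f ` {0<..}" using b_range[of t] that unfolding a_def L_def S_def by simp
    then show "deriv f (g t) = a t" unfolding g_def fdot_inv_def by (rule f_inv_into_f)
  qed
  define G where "G t = (if t \<in> S then g t else 0)" for t
  have Gm: "G \<in> borel_measurable Q" unfolding G_def
    by (rule G_meas[OF f_convex a_strict a_diff Ss am gS])
  have G0: "G t \<ge> 0" for t unfolding G_def using gS by (simp add: less_imp_le)
  define d where "d t = ennreal (G t)" for t
  have dm: "d \<in> borel_measurable Q" unfolding d_def using Gm by measurable
  define Pstar where "Pstar = density Q d"
  have dint: "(\<integral>\<^sup>+ t. d t \<partial>Q) = 1"
  proof -
    have "(\<integral>\<^sup>+ t. d t \<partial>Q) = (\<integral>\<^sup>+ theta. ennreal (fdot_inv f (- (beta + emp_risk ell h z theta) / lam))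
                    * indicator (msupp Q) theta \<partial>Q)"
      by (rule nn_integral_cong) (simp add: d_def G_def g_def a_def L_def S_def)
    then show ?thesis using b_int by simp
  qed
  have sp: "space Pstar = space Q" unfolding Pstar_def by simp
  have Pstar_prob: "prob_space Pstar"
  proof (rule prob_spaceI)
    have "emeasure Pstar (space Q) = (\<integral>\<^sup>+ t. d t * indicator (space Q) t \<partial>Q)"
      unfolding Pstar_def by (rule emeasure_density[OF dm]) simp
    also have "\<dots> = (\<integral>\<^sup>+ t. d t \<partial>Q)" by (rule nn_integral_cong) simp
    finally show "emeasure Pstar (space Pstar) = 1" using dint sp by simp
  qed
  have PsD: "Pstar \<in> DeltaQ Q"
    unfolding DeltaQ_def Pstar_def using Pstar_prob absolutely_continuousI_density[OF dm]
    by (simp add: Pstar_def)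
  define ps where "ps t = enn2real (RN_deriv Q Pstar t)" for t
  have psm: "ps \<in> borel_measurable Q" unfolding ps_def by (rule dens_rep(1)[OF Q_prob PsD])
  have ps0: "\<And>t. ps t \<ge> 0" unfolding ps_def by simp
  have psint: "(\<integral>\<^sup>+ t. ennreal (ps t) \<partial>Q) = 1" unfolding ps_def by (rule dens_rep(3)[OF Q_prob PsD])
  have AEps: "AE t in Q. d t = RN_deriv Q Pstar t"
    by (rule Qp.RN_deriv_unique[OF dm]) (simp add: Pstar_def)
  have opt: "AE t in Q. ps t > 0 \<and> deriv f (ps t) = - (beta + L t) / lam"
    using AEps AES
  proof eventually_elim
    case (elim t)
    then have "ps t = g t" unfolding ps_def d_def G_def by (metis enn2real_ennreal G0 G_def)
    then show ?case using gS[OF elim(2)] unfolding a_def by simp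
  qed
  define V where "V P = exp_risk ell h z P + ereal lam * fdiv f P Q" for P
  define W where "W p = enn2ereal (Xf f lam L Q p) - ereal (lam * enn2real (Ineg f Q p))" for p
  have VW: "V P = W (\<lambda>t. enn2real (RN_deriv Q P t))" if "P \<in> DeltaQ Q" for P
    unfolding V_def W_def L_def by (rule value_rep(1)[OF f_convex a_diff f_one Q_prob that lam_pos L_meas])
  have dA: "\<forall>x>0. f differentiable (at x)" using a_diff by blast
  note cmp1 = cmp(1)[OF f_convex a_strict dA f_one lam_pos Q_prob Lm L0]
  note cmp2 = cmp(2)[OF f_convex a_strict dA f_one lam_pos Q_prob Lm L0]
  obtain p0 where p0: "p0 \<in> borel_measurable Q" "\<forall>t. p0 t \<ge> 0" "(\<integral>\<^sup>+ t. ennreal (p0 t) \<partial>Q) = 1"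
      "Xf f lam L Q p0 < \<infinity>"
    using exists_finite_p[OF Q_prob Lm L0, of f lam] by blast
  have "W ps \<le> W p0" unfolding W_def
    by (rule cmp1[OF p0(1) _ p0(3) psm ps0 psint opt]) (use p0(2) in auto)
  moreover have "W p0 < \<infinity>" unfolding W_def using p0(4)
    by (cases "Xf f lam L Q p0" rule: ennreal_cases) auto
  ultimately have Xps: "Xf f lam L Q ps < \<infinity>"
    unfolding W_def by (cases "Xf f lam L Q ps" rule: ennreal_cases) (auto simp: less_top)
  have Vps: "V Pstar = W ps" unfolding ps_def by (rule VW[OF PsD])
  have minimal: "V Pstar \<le> V P" if "P \<in> DeltaQ Q" for P
  proof -
    define p where "p t = enn2real (RN_deriv Q P t)" for t
    have pm: "p \<in> borel_measurable Q" unfolding p_def by (rule dens_rep(1)[OF Q_prob that])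
    have p0': "\<And>t. p t \<ge> 0" unfolding p_def by simp
    have pint: "(\<integral>\<^sup>+ t. ennreal (p t) \<partial>Q) = 1" unfolding p_def by (rule dens_rep(3)[OF Q_prob that])
    have "V P = W p" unfolding p_def by (rule VW[OF that])
    moreover have "W ps \<le> W p" unfolding W_def by (rule cmp1[OF pm p0' pint psm ps0 psint opt])
    ultimately show ?thesis using Vps by simp
  qed
  have unique: "P = Pstar" if "P \<in> DeltaQ Q" "V P \<le> V Pstar" for P
  proof -
    define p where "p t = enn2real (RN_deriv Q P t)" for t
    have pm: "p \<in> borel_measurable Q" unfolding p_def by (rule dens_rep(1)[OF Q_prob that(1)])
    have p0': "\<And>t. p t \<ge> 0" unfolding p_def by simp
    have pint: "(\<integral>\<^sup>+ t. ennreal (p t) \<partial>Q) = 1" unfolding p_def by (rule dens_rep(3)[OF Q_prob that(1)])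
    have "V P = W p" unfolding p_def by (rule VW[OF that(1)])
    then have "W p \<le> W ps" using that(2) Vps by simp
    then have AEeq: "AE t in Q. p t = ps t" unfolding W_def
      by (rule cmp2[OF pm p0' pint psm ps0 psint opt _ Xps])
    have "P = density Q (\<lambda>t. ennreal (p t))" unfolding p_def by (rule dens_rep(2)[OF Q_prob that(1)])
    also have "\<dots> = density Q (\<lambda>t. ennreal (ps t))"
      by (rule density_cong) (use pm psm AEeq in \<open>auto elim!: eventually_mono\<close>)
    also have "\<dots> = Pstar" unfolding ps_def by (rule dens_rep(2)[OF Q_prob PsD, symmetric])
    finally show ?thesis .
  qed
  have partii: "fdiv f Pstar Q \<le> ereal eta
              \<and> (\<forall>P \<in> DeltaQ Q. fdiv f P Q \<le> ereal eta \<longrightarrow>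
                    exp_risk ell h z Pstar \<le> exp_risk ell h z P)
              \<and> (\<forall>P \<in> DeltaQ Q. fdiv f P Q \<le> ereal eta \<longrightarrow>
                    exp_risk ell h z P \<le> exp_risk ell h z Pstar \<longrightarrow> P = Pstar)"
    if eta: "eta \<ge> 0" "fdiv f Pstar Q = ereal eta" for eta
  proof (intro conjI ballI impI)
    show "fdiv f Pstar Q \<le> ereal eta" using eta by simp
  next
    fix P assume P: "P \<in> DeltaQ Q" and D: "fdiv f P Q \<le> ereal eta"
    have "exp_risk ell h z Pstar + ereal (lam * eta) = V Pstar" unfolding V_def using eta by simp
    also have "\<dots> \<le> V P" by (rule minimal[OF P])
    also have "\<dots> \<le> exp_risk ell h z P + ereal (lam * eta)" unfolding V_def
    proof (rule add_left_mono)
      have "ereal lam * fdiv f P Q \<le> ereal lam * ereal eta"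
        by (rule ereal_mult_left_mono[OF D]) (use lam_pos in simp)
      then show "ereal lam * fdiv f P Q \<le> ereal (lam * eta)" by simp
    qed
    finally show "exp_risk ell h z Pstar \<le> exp_risk ell h z P"
      using ereal_add_le_add_iff2 by auto
  next
    fix P assume P: "P \<in> DeltaQ Q" and D: "fdiv f P Q \<le> ereal eta"
      and R: "exp_risk ell h z P \<le> exp_risk ell h z Pstar"
    have "V P \<le> exp_risk ell h z Pstar + ereal lam * ereal eta" unfolding V_def
    proof (rule add_mono[OF R])
      show "ereal lam * fdiv f P Q \<le> ereal lam * ereal eta"
        by (rule ereal_mult_left_mono[OF D]) (use lam_pos in simp)
    qed
    also have "\<dots> = V Pstar" unfolding V_def using eta by simp
    finally show "P = Pstar" by (rule unique[OF P])
  qed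
  have dS: "\<forall>theta \<in> msupp Q. d theta = ennreal (fdot_inv f (- (beta + emp_risk ell h z theta) / lam))"
    by (simp add: d_def G_def g_def a_def L_def S_def)
  show ?thesis
    apply (rule exI[of _ Pstar])
    using PsD minimal unique dm dS partii unfolding V_def Pstar_def
    by blast
qed

end
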